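(* Let $\mathbb{C}$ be a pointed finitely complete Mal'tsev category and let $u:S\to X$ be a morphism in $\mathbb{C}$. The following are equivalent: (a) $u$ is a characteristic monomorphism; (b) for each protosplit monomorphism $\kappa:X\to A$ the composite $\kappa u$ is a Bourn-normal monomorphism; (c) for each reflexive relation $(R,r_1,r_2)$ on an object $Y$ together with a kernel $k:X\to R$ of $r_1$, there exist a reflexive relation $(T,t_1,t_2)$ on $Y$, a monomorphism $v:T\to R$ with $r_1v=t_1$ and $r_2v=t_2$ (a monomorphism of reflexive relations), and a kernel $l:S\to T$ of $t_1$, such that $vl=ku$; (d) the same as (c) with "reflexive relation" replaced by "equivalence relation" throughout.
   Context: A category is Mal'tsev if it is finitely complete and every internal reflexive relation is an internal equivalence relation. A relation $(R,r_1,r_2)$ on $Y$ is a pair $r_1,r_2:R\to Y$ with $\langle r_1,r_2\rangle$ a monomorphism; it is reflexive if there is $s:Y\to R$ with $r_1s=r_2s=1_Y$. A protosplit monomorphism is a kernel of a split epimorphism. A monomorphism $m:S\to Y$ is Bourn-normal if there is an equivalence relation $(R,r_1,r_2)$ on $Y$ and $\tilde m:S\times S\to R$ with $r_1\tilde m=m\pi_1$, $r_2\tilde m=m\pi_2$ and the square $r_1\tilde m=m\pi_1$ a pullback. A morphism $u:S\to X$ is a characteristic monomorphism if for every Bourn-normal monomorphism $n:X\to Y$ the composite $nu$ is a Bourn-normal monomorphism. *)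

theory Defs
  imports Main
begin

text \<open>A category with objects of type 'o and morphisms of type 'm.
  Comp C g f is the composite "g after f" (defined when Dom g = Cod f).\<close>

record ('o, 'm) cat =
  Dom :: "'m \<Rightarrow> 'o"
  Cod :: "'m \<Rightarrow> 'o"
  Comp :: "'m \<Rightarrow> 'm \<Rightarrow> 'm"
  Idm :: "'o \<Rightarrow> 'm"

definition hom :: "('o,'m) cat \<Rightarrow> 'm \<Rightarrow> 'o \<Rightarrow> 'o \<Rightarrow> bool" where
  "hom C f X Y \<longleftrightarrow> Dom C f = X \<and> Cod C f = Y"

definition category :: "('o,'m) cat \<Rightarrow> bool" where
  "category C \<longleftrightarrow>
     (\<forall>X. hom C (Idm C X) X X) \<and>
     (\<forall>f g. Dom C g = Cod C f \<longrightarrow> hom C (Comp C g f) (Dom C f) (Cod C g)) \<and>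
     (\<forall>f. Comp C (Idm C (Cod C f)) f = f \<and> Comp C f (Idm C (Dom C f)) = f) \<and>
     (\<forall>f g h. Dom C g = Cod C f \<and> Dom C h = Cod C g \<longrightarrow>
        Comp C h (Comp C g f) = Comp C (Comp C h g) f)"

definition mono :: "('o,'m) cat \<Rightarrow> 'm \<Rightarrow> bool" where
  "mono C m \<longleftrightarrow> (\<forall>f g. Cod C f = Dom C m \<and> Cod C g = Dom C m \<and> Dom C f = Dom C g \<and>
      Comp C m f = Comp C m g \<longrightarrow> f = g)"

definition is_pullback :: "('o,'m) cat \<Rightarrow> 'm \<Rightarrow> 'm \<Rightarrow> 'm \<Rightarrow> 'm \<Rightarrow> bool" where
  "is_pullback C f g p q \<longleftrightarrow>
     Cod C f = Cod C g \<and> Dom C f = Cod C p \<and> Dom C g = Cod C q \<and> Dom C p = Dom C q \<and>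
     Comp C f p = Comp C g q \<and>
     (\<forall>a b. Cod C a = Dom C f \<and> Cod C b = Dom C g \<and> Dom C a = Dom C b \<and>
        Comp C f a = Comp C g b \<longrightarrow>
        (\<exists>!h. hom C h (Dom C a) (Dom C p) \<and> Comp C p h = a \<and> Comp C q h = b))"

definition is_product :: "('o,'m) cat \<Rightarrow> 'o \<Rightarrow> 'o \<Rightarrow> 'm \<Rightarrow> 'm \<Rightarrow> bool" where
  "is_product C A B p1 p2 \<longleftrightarrow>
     Cod C p1 = A \<and> Cod C p2 = B \<and> Dom C p1 = Dom C p2 \<and>
     (\<forall>f g. Dom C f = Dom C g \<and> Cod C f = A \<and> Cod C g = B \<longrightarrow>
        (\<exists>!h. hom C h (Dom C f) (Dom C p1) \<and> Comp C p1 h = f \<and> Comp C p2 h = g))"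

definition terminal :: "('o,'m) cat \<Rightarrow> 'o \<Rightarrow> bool" where
  "terminal C T \<longleftrightarrow> (\<forall>X. \<exists>!f. hom C f X T)"

definition initial :: "('o,'m) cat \<Rightarrow> 'o \<Rightarrow> bool" where
  "initial C I \<longleftrightarrow> (\<forall>X. \<exists>!f. hom C f I X)"

definition zero_object :: "('o,'m) cat \<Rightarrow> 'o \<Rightarrow> bool" where
  "zero_object C Z \<longleftrightarrow> terminal C Z \<and> initial C Z"

definition pointed :: "('o,'m) cat \<Rightarrow> bool" where
  "pointed C \<longleftrightarrow> (\<exists>Z. zero_object C Z)"

definition finitely_complete :: "('o,'m) cat \<Rightarrow> bool" where
  "finitely_complete C \<longleftrightarrow> (\<exists>T. terminal C T) \<and>
     (\<forall>f g. Cod C f = Cod C g \<longrightarrow> (\<exists>p q. is_pullback C f g p q))"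

definition zero_mor :: "('o,'m) cat \<Rightarrow> 'm \<Rightarrow> bool" where
  "zero_mor C f \<longleftrightarrow> (\<exists>Z g h. zero_object C Z \<and> hom C g (Dom C f) Z \<and> hom C h Z (Cod C f) \<and>
      f = Comp C h g)"

definition is_kernel :: "('o,'m) cat \<Rightarrow> 'm \<Rightarrow> 'm \<Rightarrow> bool" where
  "is_kernel C k f \<longleftrightarrow> Cod C k = Dom C f \<and> zero_mor C (Comp C f k) \<and>
     (\<forall>a. Cod C a = Dom C f \<and> zero_mor C (Comp C f a) \<longrightarrow>
        (\<exists>!h. hom C h (Dom C a) (Dom C k) \<and> Comp C k h = a))"

definition split_epi :: "('o,'m) cat \<Rightarrow> 'm \<Rightarrow> bool" where
  "split_epi C f \<longleftrightarrow> (\<exists>s. hom C s (Cod C f) (Dom C f) \<and> Comp C f s = Idm C (Cod C f))"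

definition protosplit_mono :: "('o,'m) cat \<Rightarrow> 'm \<Rightarrow> bool" where
  "protosplit_mono C k \<longleftrightarrow> (\<exists>f. split_epi C f \<and> is_kernel C k f)"

text \<open>A relation (R,r1,r2) on Y; the pairing <r1,r2> : R \<rightarrow> Y \<times> Y being a
  monomorphism means exactly that r1, r2 are jointly monic.\<close>
definition relation :: "('o,'m) cat \<Rightarrow> 'o \<Rightarrow> 'm \<Rightarrow> 'm \<Rightarrow> 'o \<Rightarrow> bool" where
  "relation C R r1 r2 Y \<longleftrightarrow> hom C r1 R Y \<and> hom C r2 R Y \<and>
     (\<forall>f g. Cod C f = R \<and> Cod C g = R \<and> Dom C f = Dom C g \<and>
        Comp C r1 f = Comp C r1 g \<and> Comp C r2 f = Comp C r2 g \<longrightarrow> f = g)"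

definition reflexive_relation :: "('o,'m) cat \<Rightarrow> 'o \<Rightarrow> 'm \<Rightarrow> 'm \<Rightarrow> 'o \<Rightarrow> bool" where
  "reflexive_relation C R r1 r2 Y \<longleftrightarrow> relation C R r1 r2 Y \<and>
     (\<exists>s. hom C s Y R \<and> Comp C r1 s = Idm C Y \<and> Comp C r2 s = Idm C Y)"

definition equivalence_relation :: "('o,'m) cat \<Rightarrow> 'o \<Rightarrow> 'm \<Rightarrow> 'm \<Rightarrow> 'o \<Rightarrow> bool" where
  "equivalence_relation C R r1 r2 Y \<longleftrightarrow> reflexive_relation C R r1 r2 Y \<and>
     (\<exists>\<sigma>. hom C \<sigma> R R \<and> Comp C r1 \<sigma> = r2 \<and> Comp C r2 \<sigma> = r1) \<and>
     (\<forall>p1 p2. is_pullback C r2 r1 p1 p2 \<longrightarrow>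
        (\<exists>\<tau>. hom C \<tau> (Dom C p1) R \<and> Comp C r1 \<tau> = Comp C r1 p1 \<and> Comp C r2 \<tau> = Comp C r2 p2))"

definition maltsev :: "('o,'m) cat \<Rightarrow> bool" where
  "maltsev C \<longleftrightarrow> finitely_complete C \<and>
     (\<forall>R r1 r2 Y. reflexive_relation C R r1 r2 Y \<longrightarrow> equivalence_relation C R r1 r2 Y)"

definition bourn_normal :: "('o,'m) cat \<Rightarrow> 'm \<Rightarrow> bool" where
  "bourn_normal C m \<longleftrightarrow> mono C m \<and>
     (\<exists>R r1 r2 pi1 pi2 mt.
        equivalence_relation C R r1 r2 (Cod C m) \<and>
        is_product C (Dom C m) (Dom C m) pi1 pi2 \<and>
        hom C mt (Dom C pi1) R \<and>
        Comp C r1 mt = Comp C m pi1 \<and> Comp C r2 mt = Comp C m pi2 \<and>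
        is_pullback C r1 m mt pi1)"

definition characteristic_mono :: "('o,'m) cat \<Rightarrow> 'm \<Rightarrow> bool" where
  "characteristic_mono C u \<longleftrightarrow>
     (\<forall>n. bourn_normal C n \<and> Dom C n = Cod C u \<longrightarrow> bourn_normal C (Comp C n u))"

end

theory Submission
  imports Defs
begin

declare hom_def[simp]

locale pfc =
  fixes C :: "('o,'m) cat"
  assumes cat: "category C" and pt: "pointed C" and fc: "finitely_complete C"
begin

lemma id_hom: "hom C (Idm C X) X X"
  using cat unfolding category_def by blast

lemma id_dom[simp]: "Dom C (Idm C X) = X" and id_cod[simp]: "Cod C (Idm C X) = X"
  using id_hom[of X] unfolding hom_def by blast+

lemma comp_dom[simp]: "Dom C g = Cod C f \<Longrightarrow> Dom C (Comp C g f) = Dom C f"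
  and comp_cod[simp]: "Dom C g = Cod C f \<Longrightarrow> Cod C (Comp C g f) = Cod C g"
proof -
  assume "Dom C g = Cod C f"
  moreover have "\<forall>f g. Dom C g = Cod C f \<longrightarrow> hom C (Comp C g f) (Dom C f) (Cod C g)"
    using cat unfolding category_def by blast
  ultimately have "hom C (Comp C g f) (Dom C f) (Cod C g)" by blast
  then show "Dom C (Comp C g f) = Dom C f" "Cod C (Comp C g f) = Cod C g" unfolding hom_def by blast+
qed

lemma id_l[simp]: "Cod C f = X \<Longrightarrow> Comp C (Idm C X) f = f"
  and id_r[simp]: "Dom C f = X \<Longrightarrow> Comp C f (Idm C X) = f"
proof -
  have "\<forall>f. Comp C (Idm C (Cod C f)) f = f \<and> Comp C f (Idm C (Dom C f)) = f"
    using cat unfolding category_def by blast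
  then show "Cod C f = X \<Longrightarrow> Comp C (Idm C X) f = f" "Dom C f = X \<Longrightarrow> Comp C f (Idm C X) = f" by blast+
qed

lemma assoc[simp]: "Dom C g = Cod C f \<Longrightarrow> Dom C h = Cod C g \<Longrightarrow>
   Comp C (Comp C h g) f = Comp C h (Comp C g f)"
proof -
  assume "Dom C g = Cod C f" "Dom C h = Cod C g"
  moreover have "\<forall>f g h. Dom C g = Cod C f \<and> Dom C h = Cod C g \<longrightarrow>
        Comp C h (Comp C g f) = Comp C (Comp C h g) f"
    using cat unfolding category_def by blast
  ultimately show ?thesis by metis
qed

definition Z0 where "Z0 = (SOME Z. zero_object C Z)"

lemma Z0: "zero_object C Z0"
  using pt unfolding pointed_def Z0_def by (metis someI_ex)

lemma term_uniq: "Dom C f = A \<Longrightarrow> Cod C f = Z0 \<Longrightarrow> Dom C g = A \<Longrightarrow> Cod C g = Z0 \<Longrightarrow> f = g"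
  using Z0 unfolding zero_object_def terminal_def by auto

lemma init_uniq: "Dom C f = Z0 \<Longrightarrow> Cod C f = B \<Longrightarrow> Dom C g = Z0 \<Longrightarrow> Cod C g = B \<Longrightarrow> f = g"
  using Z0 unfolding zero_object_def initial_def by auto

definition tm where "tm A = (THE f. hom C f A Z0)"
definition im where "im B = (THE f. hom C f Z0 B)"

lemma tm: "Dom C (tm A) = A" "Cod C (tm A) = Z0"
proof -
  have "\<exists>!f. hom C f A Z0" using Z0 unfolding zero_object_def terminal_def by auto
  then have "hom C (tm A) A Z0" unfolding tm_def by (rule theI')
  then show "Dom C (tm A) = A" "Cod C (tm A) = Z0" by auto
qed

lemma im: "Dom C (im B) = Z0" "Cod C (im B) = B"
proof -
  have "\<exists>!f. hom C f Z0 B" using Z0 unfolding zero_object_def initial_def by auto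
  then have "hom C (im B) Z0 B" unfolding im_def by (rule theI')
  then show "Dom C (im B) = Z0" "Cod C (im B) = B" by auto
qed

definition z where "z A B = Comp C (im B) (tm A)"

lemma z_dom[simp]: "Dom C (z A B) = A" and z_cod[simp]: "Cod C (z A B) = B"
  unfolding z_def using tm im by auto

lemma zo_term: "zero_object C Z \<Longrightarrow> \<exists>f. hom C f X Z"
proof -
  assume "zero_object C Z"
  hence "terminal C Z" unfolding zero_object_def by simp
  hence "\<exists>!f. hom C f X Z" unfolding terminal_def by (rule spec)
  thus ?thesis by (rule ex1_implies_ex)
qed

lemma zo_init: "zero_object C Z \<Longrightarrow> \<exists>f. hom C f Z X"
proof -
  assume "zero_object C Z"
  hence "initial C Z" unfolding zero_object_def by simp
  hence "\<exists>!f. hom C f Z X" unfolding initial_def by (rule spec)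
  thus ?thesis by (rule ex1_implies_ex)
qed

lemma zero_fact: assumes Z: "zero_object C Z" and g: "Dom C g = A" "Cod C g = Z"
  and h: "Dom C h = Z" "Cod C h = B" shows "Comp C h g = z A B"
proof -
  obtain i where i: "hom C i Z Z0" using zo_term[OF Z0] by blast
  obtain i' where i': "hom C i' Z0 Z" using zo_init[OF Z0] by blast
  have ig: "Comp C i g = tm A" using i g tm by (intro term_uniq) auto
  have u: "\<exists>!f. hom C f Z Z" using Z unfolding zero_object_def initial_def by blast
  have "hom C (Comp C i' i) Z Z" using i i' by simp
  moreover have "hom C (Idm C Z) Z Z" by simp
  ultimately have ii: "Comp C i' i = Idm C Z" using u by blast
  have hi: "Comp C h i' = im B" using h i' im by (intro init_uniq) auto
  have "Comp C h g = Comp C (Comp C h (Comp C i' i)) g" using ii h by simp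
  also have "... = Comp C (Comp C h i') (Comp C i g)" using h i i' g by simp
  also have "... = z A B" unfolding hi ig z_def ..
  finally show ?thesis .
qed

lemma zero_mor_iff: "zero_mor C f \<longleftrightarrow> f = z (Dom C f) (Cod C f)"
proof
  assume "zero_mor C f"
  then obtain Z g h where Z: "zero_object C Z" and g: "hom C g (Dom C f) Z" and h: "hom C h Z (Cod C f)"
    and f: "f = Comp C h g" unfolding zero_mor_def by blast
  have "Comp C h g = z (Dom C f) (Cod C f)" using g h by (intro zero_fact[OF Z]) auto
  then show "f = z (Dom C f) (Cod C f)" using trans[OF f] by blast
next
  assume "f = z (Dom C f) (Cod C f)"
  then have a: "f = Comp C (im (Cod C f)) (tm (Dom C f))" unfolding z_def .
  show "zero_mor C f" unfolding zero_mor_def hom_def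
    by (rule exI[of _ Z0], rule exI[of _ "tm (Dom C f)"], rule exI[of _ "im (Cod C f)"])
      (simp only: a[symmetric] Z0 tm im simp_thms)
qed

lemma z_zero[simp]: "zero_mor C (z A B)"
  using zero_mor_iff by simp

lemma z_comp_r[simp]: "Cod C f = A \<Longrightarrow> Comp C (z A B) f = z (Dom C f) B"
proof -
  assume a: "Cod C f = A"
  have "Comp C (tm A) f = tm (Dom C f)" using a tm by (intro term_uniq) auto
  then show ?thesis unfolding z_def using a tm im by simp
qed

lemma z_comp_l[simp]: "Dom C g = B \<Longrightarrow> Comp C g (z A B) = z A (Cod C g)"
proof -
  assume a: "Dom C g = B"
  have "Comp C g (im B) = im (Cod C g)" using a im by (intro init_uniq) auto
  have "Comp C g (Comp C (im B) (tm A)) = Comp C (Comp C g (im B)) (tm A)" using a tm im by simp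
  then show ?thesis unfolding z_def using \<open>Comp C g (im B) = im (Cod C g)\<close> by simp
qed


lemma assoc_eq: "Comp C f p = w \<Longrightarrow> Dom C f = Cod C p \<Longrightarrow> Dom C p = Cod C h \<Longrightarrow>
   Comp C f (Comp C p h) = Comp C w h"
proof -
  assume e: "Comp C f p = w" and d: "Dom C f = Cod C p" "Dom C p = Cod C h"
  have A: "Comp C (Comp C f p) h = Comp C f (Comp C p h)" using assoc[of p h f] d by simp
  show ?thesis by (simp only: A[symmetric] e)
qed

lemma zero_comp_iff: "Dom C f = Cod C a \<Longrightarrow> zero_mor C (Comp C f a) \<longleftrightarrow> Comp C f a = z (Dom C a) (Cod C f)"
  using zero_mor_iff by simp

lemma monoD: "mono C m \<Longrightarrow> Cod C a = Dom C m \<Longrightarrow> Cod C b = Dom C m \<Longrightarrow> Dom C a = Dom C b \<Longrightarrow>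
   Comp C m a = Comp C m b \<Longrightarrow> a = b"
  unfolding mono_def by blast

lemma pb_D: assumes "is_pullback C f g p q"
  shows "Cod C f = Cod C g" "Dom C f = Cod C p" "Dom C g = Cod C q" "Dom C p = Dom C q"
    "Comp C f p = Comp C g q"
  using assms unfolding is_pullback_def by blast+

lemma pb_fac: assumes "is_pullback C f g p q" "Cod C a = Dom C f" "Cod C b = Dom C g" "Dom C a = Dom C b"
  "Comp C f a = Comp C g b"
  obtains h where "Dom C h = Dom C a" "Cod C h = Dom C p" "Comp C p h = a" "Comp C q h = b"
proof -
  have "\<exists>!h. hom C h (Dom C a) (Dom C p) \<and> Comp C p h = a \<and> Comp C q h = b"
    using assms unfolding is_pullback_def by blast
  then show ?thesis using that by auto
qed

lemma pb_uniq: assumes P: "is_pullback C f g p q" and h: "Cod C h = Dom C p" "Cod C h' = Dom C p" "Dom C h = Dom C h'"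
  and e: "Comp C p h = Comp C p h'" "Comp C q h = Comp C q h'"
  shows "h = h'"
proof -
  note D = pb_D[OF P]
  have sq: "Comp C f (Comp C p h) = Comp C g (Comp C q h)" using D h by (simp add: assoc_eq[OF D(5)])
  have U: "\<forall>a b. Cod C a = Dom C f \<and> Cod C b = Dom C g \<and> Dom C a = Dom C b \<and>
        Comp C f a = Comp C g b \<longrightarrow>
        (\<exists>!h. hom C h (Dom C a) (Dom C p) \<and> Comp C p h = a \<and> Comp C q h = b)"
    using P unfolding is_pullback_def by blast
  have "\<exists>!k. hom C k (Dom C (Comp C p h)) (Dom C p) \<and> Comp C p k = Comp C p h \<and> Comp C q k = Comp C q h"
    using U[rule_format, of "Comp C p h" "Comp C q h"] sq D h by simp
  then show ?thesis using h e D by auto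
qed

lemma prod_D: assumes "is_product C A B p1 p2"
  shows "Cod C p1 = A" "Cod C p2 = B" "Dom C p1 = Dom C p2"
  using assms unfolding is_product_def by blast+

lemma prod_fac: assumes "is_product C A B p1 p2" "Dom C f = Dom C g" "Cod C f = A" "Cod C g = B"
  obtains h where "Dom C h = Dom C f" "Cod C h = Dom C p1" "Comp C p1 h = f" "Comp C p2 h = g"
proof -
  have "\<exists>!h. hom C h (Dom C f) (Dom C p1) \<and> Comp C p1 h = f \<and> Comp C p2 h = g"
    using assms unfolding is_product_def by blast
  then show ?thesis using that by auto
qed

lemma prod_uniq: assumes P: "is_product C A B p1 p2" and h: "Cod C h = Dom C p1" "Cod C h' = Dom C p1" "Dom C h = Dom C h'"
  and e: "Comp C p1 h = Comp C p1 h'" "Comp C p2 h = Comp C p2 h'"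
  shows "h = h'"
proof -
  note D = prod_D[OF P]
  have U: "\<forall>f g. Dom C f = Dom C g \<and> Cod C f = A \<and> Cod C g = B \<longrightarrow>
        (\<exists>!h. hom C h (Dom C f) (Dom C p1) \<and> Comp C p1 h = f \<and> Comp C p2 h = g)"
    using P unfolding is_product_def by blast
  have "\<exists>!k. hom C k (Dom C (Comp C p1 h)) (Dom C p1) \<and> Comp C p1 k = Comp C p1 h \<and> Comp C p2 k = Comp C p2 h"
    using U[rule_format, of "Comp C p1 h" "Comp C p2 h"] D h by simp
  then show ?thesis using h e D by auto
qed

lemma pb_ex: "Cod C f = Cod C g \<Longrightarrow> \<exists>p q. is_pullback C f g p q"
  using fc unfolding finitely_complete_def by blast

lemma prod_ex: "\<exists>p1 p2. is_product C A B p1 p2"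
proof -
  obtain T where T: "terminal C T" using fc unfolding finitely_complete_def by blast
  have tu: "\<And>X. \<exists>!f. hom C f X T" using T unfolding terminal_def by blast
  obtain ta where ta: "hom C ta A T" using tu by blast
  obtain tb where tb: "hom C tb B T" using tu by blast
  have "Cod C ta = Cod C tb" using ta tb by simp
  then obtain p q where P: "is_pullback C ta tb p q" using pb_ex by blast
  note D = pb_D[OF P]
  have "is_product C A B p q"
    unfolding is_product_def
  proof (intro conjI allI impI)
    show "Cod C p = A" "Cod C q = B" "Dom C p = Dom C q" using D ta tb by auto
    fix f g assume a: "Dom C f = Dom C g \<and> Cod C f = A \<and> Cod C g = B"
    have "Comp C ta f = Comp C tb g"
    proof -
      have "hom C (Comp C ta f) (Dom C f) T" "hom C (Comp C tb g) (Dom C f) T" using a ta tb by auto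
      then show ?thesis using tu by blast
    qed
    note sq = this
    obtain h where h: "Dom C h = Dom C f" "Cod C h = Dom C p" "Comp C p h = f" "Comp C q h = g"
      by (rule pb_fac[OF P, of f g]) (use a ta tb sq in auto)
    show "\<exists>!h. hom C h (Dom C f) (Dom C p) \<and> Comp C p h = f \<and> Comp C q h = g"
    proof (rule ex1I[of _ h])
      show "hom C h (Dom C f) (Dom C p) \<and> Comp C p h = f \<and> Comp C q h = g" using h by simp
      fix h' assume h': "hom C h' (Dom C f) (Dom C p) \<and> Comp C p h' = f \<and> Comp C q h' = g"
      show "h' = h" by (rule pb_uniq[OF P]) (use h h' in auto)
    qed
  qed
  then show ?thesis by blast
qed

lemma eq_ex: assumes f: "Dom C f = A" "Cod C f = B" and g: "Dom C g = A" "Cod C g = B"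
  obtains j where "Cod C j = A" "Comp C f j = Comp C g j" "mono C j"
    "\<And>a. Cod C a = A \<Longrightarrow> Comp C f a = Comp C g a \<Longrightarrow> \<exists>h. Dom C h = Dom C a \<and> Cod C h = Dom C j \<and> Comp C j h = a"
proof -
  obtain p1 p2 where P: "is_product C A B p1 p2" using prod_ex by blast
  note PD = prod_D[OF P]
  obtain \<alpha> where al: "Dom C \<alpha> = A" "Cod C \<alpha> = Dom C p1" "Comp C p1 \<alpha> = Idm C A" "Comp C p2 \<alpha> = f"
    using prod_fac[OF P, of "Idm C A" f] f by auto
  obtain \<beta> where be: "Dom C \<beta> = A" "Cod C \<beta> = Dom C p1" "Comp C p1 \<beta> = Idm C A" "Comp C p2 \<beta> = g"
    using prod_fac[OF P, of "Idm C A" g] g by auto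
  obtain p q where Q: "is_pullback C \<alpha> \<beta> p q" using pb_ex al be by metis
  note QD = pb_D[OF Q]
  have e1: "Comp C p1 (Comp C \<alpha> p) = Comp C (Idm C A) p" by (rule assoc_eq[OF al(3)]) (use al QD PD in auto)
  have e2: "Comp C p1 (Comp C \<beta> q) = Comp C (Idm C A) q" by (rule assoc_eq[OF be(3)]) (use be QD PD in auto)
  have j1: "Cod C p = A" by (metis QD(2) al(1))
  have jq: "Cod C q = A" by (metis QD(3) be(1))
  have "p = Comp C (Idm C A) p" by (rule id_l[OF j1, symmetric])
  also have "... = Comp C p1 (Comp C \<alpha> p)" by (rule e1[symmetric])
  also have "... = Comp C p1 (Comp C \<beta> q)" by (simp only: QD(5))
  also have "... = Comp C (Idm C A) q" by (rule e2)
  also have "... = q" by (rule id_l[OF jq])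
  finally have pq: "p = q" .
  have j2: "Comp C f p = Comp C g p"
  proof -
    have e1: "Comp C p2 (Comp C \<alpha> p) = Comp C f p" by (rule assoc_eq[OF al(4)]) (use al QD PD in auto)
    have e2: "Comp C p2 (Comp C \<beta> q) = Comp C g q" by (rule assoc_eq[OF be(4)]) (use be QD PD in auto)
    have "Comp C f p = Comp C p2 (Comp C \<alpha> p)" by (rule e1[symmetric])
    also have "... = Comp C p2 (Comp C \<beta> q)" by (simp only: QD(5))
    also have "... = Comp C g p" using e2 pq by simp
    finally show ?thesis .
  qed
  have j3: "mono C p" unfolding mono_def
  proof (intro allI impI)
    fix a b assume ab: "Cod C a = Dom C p \<and> Cod C b = Dom C p \<and> Dom C a = Dom C b \<and> Comp C p a = Comp C p b"
    have qab: "Comp C q a = Comp C q b" using ab pq by simp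
    show "a = b" by (rule pb_uniq[OF Q]) (use ab qab in auto)
  qed
  have j4: "\<exists>h. Dom C h = Dom C a \<and> Cod C h = Dom C p \<and> Comp C p h = a"
    if a: "Cod C a = A" "Comp C f a = Comp C g a" for a
  proof -
    have ab: "Comp C \<alpha> a = Comp C \<beta> a"
    proof (rule prod_uniq[OF P])
      show "Cod C (Comp C \<alpha> a) = Dom C p1" "Cod C (Comp C \<beta> a) = Dom C p1"
        "Dom C (Comp C \<alpha> a) = Dom C (Comp C \<beta> a)" using al be a by auto
      have "Comp C p1 (Comp C \<alpha> a) = Comp C (Idm C A) a" by (rule assoc_eq[OF al(3)]) (use al a PD in auto)
      moreover have "Comp C p1 (Comp C \<beta> a) = Comp C (Idm C A) a" by (rule assoc_eq[OF be(3)]) (use be a PD in auto)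
      ultimately show "Comp C p1 (Comp C \<alpha> a) = Comp C p1 (Comp C \<beta> a)" by simp
      have "Comp C p2 (Comp C \<alpha> a) = Comp C f a" by (rule assoc_eq[OF al(4)]) (use al a PD in auto)
      moreover have "Comp C p2 (Comp C \<beta> a) = Comp C g a" by (rule assoc_eq[OF be(4)]) (use be a PD in auto)
      ultimately show "Comp C p2 (Comp C \<alpha> a) = Comp C p2 (Comp C \<beta> a)" using a(2) by simp
    qed
    obtain h where "Dom C h = Dom C a" "Cod C h = Dom C p" "Comp C p h = a"
      by (rule pb_fac[OF Q, of a a]) (use al be a ab in auto)
    then show ?thesis by blast
  qed
  show ?thesis using j1 j2 j3 j4 by (rule that)
qed

lemma ker_D: assumes "is_kernel C k f" shows "Cod C k = Dom C f" "Comp C f k = z (Dom C k) (Cod C f)"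
proof -
  show c: "Cod C k = Dom C f" using assms unfolding is_kernel_def by blast
  have "zero_mor C (Comp C f k)" using assms unfolding is_kernel_def by blast
  then show "Comp C f k = z (Dom C k) (Cod C f)" using zero_comp_iff c by simp
qed

lemma ker_fac: assumes K: "is_kernel C k f" and a: "Cod C a = Dom C f" "Comp C f a = z (Dom C a) (Cod C f)"
  obtains h where "Dom C h = Dom C a" "Cod C h = Dom C k" "Comp C k h = a"
proof -
  have "zero_mor C (Comp C f a)" using a zero_comp_iff by simp
  then have "\<exists>!h. hom C h (Dom C a) (Dom C k) \<and> Comp C k h = a" using K a unfolding is_kernel_def by blast
  then show ?thesis using that by auto
qed

lemma ker_mono: assumes K: "is_kernel C k f" shows "mono C k"
  unfolding mono_def
proof (intro allI impI)
  fix a b assume ab: "Cod C a = Dom C k \<and> Cod C b = Dom C k \<and> Dom C a = Dom C b \<and> Comp C k a = Comp C k b"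
  note D = ker_D[OF K]
  have U: "\<forall>a. Cod C a = Dom C f \<and> zero_mor C (Comp C f a) \<longrightarrow>
        (\<exists>!h. hom C h (Dom C a) (Dom C k) \<and> Comp C k h = a)" using K unfolding is_kernel_def by blast
  have z1: "Comp C f (Comp C k a) = z (Dom C a) (Cod C f)"
    using D ab by (simp add: assoc_eq[OF D(2)])
  have "\<exists>!h. hom C h (Dom C (Comp C k a)) (Dom C k) \<and> Comp C k h = Comp C k a"
    using U[rule_format, of "Comp C k a"] D ab z1 by simp
  then show "a = b" using ab D by auto
qed

lemma ker_intro: assumes c: "Cod C k = Dom C f" and z: "Comp C f k = z (Dom C k) (Cod C f)" and m: "mono C k"
  and fac: "\<And>a. Cod C a = Dom C f \<Longrightarrow> Comp C f a = z (Dom C a) (Cod C f) \<Longrightarrow>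
              \<exists>h. Dom C h = Dom C a \<and> Cod C h = Dom C k \<and> Comp C k h = a"
  shows "is_kernel C k f"
  unfolding is_kernel_def
proof (intro conjI allI impI)
  show "Cod C k = Dom C f" by fact
  show "zero_mor C (Comp C f k)" using zero_comp_iff c z by simp
  fix a assume a: "Cod C a = Dom C f \<and> zero_mor C (Comp C f a)"
  then have a1: "Cod C a = Dom C f" and a0: "zero_mor C (Comp C f a)" by auto
  have a2: "Comp C f a = z (Dom C a) (Cod C f)" by (metis zero_comp_iff a1 a0)
  then obtain h where h: "Dom C h = Dom C a" "Cod C h = Dom C k" "Comp C k h = a" using fac a by blast
  show "\<exists>!h. hom C h (Dom C a) (Dom C k) \<and> Comp C k h = a"
  proof (rule ex1I[of _ h])
    show "hom C h (Dom C a) (Dom C k) \<and> Comp C k h = a" using h by simp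
    fix h' assume "hom C h' (Dom C a) (Dom C k) \<and> Comp C k h' = a"
    then show "h' = h" using monoD[OF m, of h' h] h by auto
  qed
qed

end

context pfc
begin

lemma rel_D: assumes "relation C R r1 r2 Y"
  shows "Dom C r1 = R" "Cod C r1 = Y" "Dom C r2 = R" "Cod C r2 = Y"
  using assms unfolding relation_def hom_def by blast+

lemma rel_jm: assumes "relation C R r1 r2 Y" "Cod C a = R" "Cod C b = R" "Dom C a = Dom C b"
  "Comp C r1 a = Comp C r1 b" "Comp C r2 a = Comp C r2 b" shows "a = b"
  using assms unfolding relation_def by blast

lemma eqv_rel: "equivalence_relation C R r1 r2 Y \<Longrightarrow> relation C R r1 r2 Y"
  unfolding equivalence_relation_def reflexive_relation_def by blast

lemma eqv_refl: "equivalence_relation C R r1 r2 Y \<Longrightarrow> reflexive_relation C R r1 r2 Y"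
  unfolding equivalence_relation_def by blast

lemma refl_ex: assumes "reflexive_relation C R r1 r2 Y"
  obtains s where "Dom C s = Y" "Cod C s = R" "Comp C r1 s = Idm C Y" "Comp C r2 s = Idm C Y"
  using assms unfolding reflexive_relation_def hom_def by blast

lemma eqv_sym: assumes E: "equivalence_relation C R r1 r2 Y" and a: "Cod C a = R"
  shows "\<exists>c. Dom C c = Dom C a \<and> Cod C c = R \<and> Comp C r1 c = Comp C r2 a \<and> Comp C r2 c = Comp C r1 a"
proof -
  obtain \<sigma> where s: "Dom C \<sigma> = R" "Cod C \<sigma> = R" "Comp C r1 \<sigma> = r2" "Comp C r2 \<sigma> = r1"
    using E unfolding equivalence_relation_def hom_def by blast
  note D = rel_D[OF eqv_rel[OF E]]
  have "Comp C r1 (Comp C \<sigma> a) = Comp C r2 a" using s D a by (simp add: assoc_eq[OF s(3)])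
  moreover have "Comp C r2 (Comp C \<sigma> a) = Comp C r1 a" using s D a by (simp add: assoc_eq[OF s(4)])
  ultimately show ?thesis using s a by (intro exI[of _ "Comp C \<sigma> a"]) simp
qed

lemma eqv_trans: assumes E: "equivalence_relation C R r1 r2 Y" and a: "Cod C a = R" "Cod C b = R"
  "Dom C a = Dom C b" "Comp C r2 a = Comp C r1 b"
  shows "\<exists>c. Dom C c = Dom C a \<and> Cod C c = R \<and> Comp C r1 c = Comp C r1 a \<and> Comp C r2 c = Comp C r2 b"
proof -
  note D = rel_D[OF eqv_rel[OF E]]
  have "Cod C r2 = Cod C r1" using D by simp
  then obtain q1 q2 where Q: "is_pullback C r2 r1 q1 q2" using pb_ex by blast
  note QD = pb_D[OF Q]
  obtain \<tau> where t: "hom C \<tau> (Dom C q1) R" "Comp C r1 \<tau> = Comp C r1 q1" "Comp C r2 \<tau> = Comp C r2 q2"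
    using E Q unfolding equivalence_relation_def by blast
  obtain h where h: "Dom C h = Dom C a" "Cod C h = Dom C q1" "Comp C q1 h = a" "Comp C q2 h = b"
    by (rule pb_fac[OF Q, of a b]) (use a D in auto)
  have c1: "Comp C r1 (Comp C \<tau> h) = Comp C r1 a"
  proof -
    have "Comp C r1 (Comp C \<tau> h) = Comp C (Comp C r1 q1) h" by (rule assoc_eq[OF t(2)]) (use t h D in auto)
    also have "... = Comp C r1 (Comp C q1 h)" using QD D h by simp
    finally show ?thesis using h by simp
  qed
  have c2: "Comp C r2 (Comp C \<tau> h) = Comp C r2 b"
  proof -
    have "Comp C r2 (Comp C \<tau> h) = Comp C (Comp C r2 q2) h" by (rule assoc_eq[OF t(3)]) (use t h D in auto)
    also have "... = Comp C r2 (Comp C q2 h)" using QD D h by simp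
    finally show ?thesis using h by simp
  qed
  show ?thesis using c1 c2 t h by (intro exI[of _ "Comp C \<tau> h"]) simp
qed


lemma normalization:
  assumes E: "equivalence_relation C T t1 t2 Y" and K: "is_kernel C l t1"
  shows "bourn_normal C (Comp C t2 l)"
proof -
  have R: "relation C T t1 t2 Y" by (rule eqv_rel[OF E])
  note RD = rel_D[OF R]
  note KD = ker_D[OF K]
  obtain S where S: "Dom C l = S" by blast
  have lT: "Cod C l = T" using KD RD by simp
  have lz: "Comp C t1 l = z S Y" using KD RD S by simp
  have mD: "Dom C (Comp C t2 l) = S" "Cod C (Comp C t2 l) = Y" using S lT RD by simp_all
  have lmono: "mono C l" by (rule ker_mono[OF K])
  have mmono: "mono C (Comp C t2 l)" unfolding mono_def
  proof (intro allI impI)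
    fix a b assume ab: "Cod C a = Dom C (Comp C t2 l) \<and> Cod C b = Dom C (Comp C t2 l) \<and> Dom C a = Dom C b \<and>
       Comp C (Comp C t2 l) a = Comp C (Comp C t2 l) b"
    have ab': "Cod C a = S" "Cod C b = S" "Dom C a = Dom C b" using ab mD by auto
    have 1: "Comp C t2 (Comp C l a) = Comp C t2 (Comp C l b)" using ab ab' lT RD S by simp
    have 2: "Comp C t1 (Comp C l a) = Comp C t1 (Comp C l b)"
      using ab' lT RD S by (simp add: assoc_eq[OF lz])
    have "Comp C l a = Comp C l b" by (rule rel_jm[OF R]) (use ab' lT S 1 2 in auto)
    then show "a = b" by (rule monoD[OF lmono, rotated 3]) (use ab' S in auto)
  qed
  obtain p1 p2 where P: "is_product C S S p1 p2" using prod_ex by blast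
  note PD = prod_D[OF P]
  obtain P0 where P0: "Dom C p1 = P0" by blast
  have P0': "Dom C p2 = P0" using P0 PD by simp
  obtain c0 where c0: "Dom C c0 = P0" "Cod C c0 = T" "Comp C t1 c0 = Comp C t2 (Comp C l p1)"
    "Comp C t2 c0 = Comp C t1 (Comp C l p1)"
    using eqv_sym[OF E, of "Comp C l p1"] lT S PD P0 by auto
  have c0z: "Comp C t2 c0 = z P0 Y" using c0(4) lT S PD P0 RD by (simp add: assoc_eq[OF lz])
  have lp2z: "Comp C t1 (Comp C l p2) = z P0 Y" using lT S PD P0' RD by (simp add: assoc_eq[OF lz])
  obtain mt where mt: "Dom C mt = P0" "Cod C mt = T" "Comp C t1 mt = Comp C t2 (Comp C l p1)"
    "Comp C t2 mt = Comp C t2 (Comp C l p2)"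
    using eqv_trans[OF E, of c0 "Comp C l p2"] c0 c0z lp2z lT S PD P0' by auto
  have PB: "is_pullback C t1 (Comp C t2 l) mt p1"
    unfolding is_pullback_def
  proof (intro conjI allI impI)
    show "Cod C t1 = Cod C (Comp C t2 l)" "Dom C t1 = Cod C mt" "Dom C (Comp C t2 l) = Cod C p1"
      "Dom C mt = Dom C p1" using RD mD mt PD P0 by auto
    show "Comp C t1 mt = Comp C (Comp C t2 l) p1" using mt RD lT S PD by simp
    fix a b assume ab: "Cod C a = Dom C t1 \<and> Cod C b = Dom C (Comp C t2 l) \<and> Dom C a = Dom C b \<and>
        Comp C t1 a = Comp C (Comp C t2 l) b"
    obtain W where W: "Dom C a = W" by blast
    have a1: "Cod C a = T" "Cod C b = S" "Dom C b = W" using ab RD mD W by auto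
    have a2: "Comp C t2 (Comp C l b) = Comp C t1 a" using ab lT RD S a1 by simp
    obtain c where c: "Dom C c = W" "Cod C c = T" "Comp C t1 c = Comp C t1 (Comp C l b)" "Comp C t2 c = Comp C t2 a"
      using eqv_trans[OF E, of "Comp C l b" a] a1 a2 lT S W by auto
    have cz: "Comp C t1 c = z W Y" using c(3) a1 lT S RD by (simp add: assoc_eq[OF lz])
    obtain d where d: "Dom C d = W" "Cod C d = S" "Comp C l d = c"
      by (rule ker_fac[OF K, of c]) (use c cz RD S in auto)
    obtain h where h: "Dom C h = W" "Cod C h = P0" "Comp C p1 h = b" "Comp C p2 h = d"
      by (rule prod_fac[OF P, of b d]) (use a1 d P0 in auto)
    have e1: "Comp C t1 (Comp C mt h) = Comp C t1 a"
    proof -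
      have "Comp C t1 (Comp C mt h) = Comp C (Comp C t2 (Comp C l p1)) h"
        by (rule assoc_eq[OF mt(3)]) (use mt h RD in auto)
      also have "... = Comp C t2 (Comp C l (Comp C p1 h))" using RD lT S PD P0 h by simp
      finally show ?thesis using h a2 by simp
    qed
    have e2: "Comp C t2 (Comp C mt h) = Comp C t2 a"
    proof -
      have "Comp C t2 (Comp C mt h) = Comp C (Comp C t2 (Comp C l p2)) h"
        by (rule assoc_eq[OF mt(4)]) (use mt h RD in auto)
      also have "... = Comp C t2 (Comp C l (Comp C p2 h))" using RD lT S PD P0' h by simp
      finally show ?thesis using h d c by simp
    qed
    have mth: "Comp C mt h = a" by (rule rel_jm[OF R]) (use mt h a1 W e1 e2 in auto)
    show "\<exists>!h. hom C h (Dom C a) (Dom C mt) \<and> Comp C mt h = a \<and> Comp C p1 h = b"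
    proof (rule ex1I[of _ h])
      show "hom C h (Dom C a) (Dom C mt) \<and> Comp C mt h = a \<and> Comp C p1 h = b" using h mt W mth by simp
      fix h' assume h': "hom C h' (Dom C a) (Dom C mt) \<and> Comp C mt h' = a \<and> Comp C p1 h' = b"
      have h'1: "Dom C h' = W" "Cod C h' = P0" "Comp C mt h' = a" "Comp C p1 h' = b" using h' W mt by auto
      have f2: "Comp C t2 (Comp C l (Comp C p2 k)) = Comp C t2 a"
        if k: "Dom C k = W" "Cod C k = P0" "Comp C mt k = a" for k
      proof -
        have "Comp C t2 (Comp C l (Comp C p2 k)) = Comp C (Comp C t2 (Comp C l p2)) k"
          using RD lT S PD P0' k by simp
        also have "... = Comp C t2 (Comp C mt k)"
          by (rule assoc_eq[OF mt(4), symmetric]) (use mt k RD in auto)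
        finally show ?thesis using k by simp
      qed
      have "Comp C p2 h' = Comp C p2 h"
      proof (rule monoD[OF mmono])
        show "Cod C (Comp C p2 h') = Dom C (Comp C t2 l)" "Cod C (Comp C p2 h) = Dom C (Comp C t2 l)"
          "Dom C (Comp C p2 h') = Dom C (Comp C p2 h)" using PD P0' h h'1 mD by auto
        show "Comp C (Comp C t2 l) (Comp C p2 h') = Comp C (Comp C t2 l) (Comp C p2 h)"
          using f2[OF h'1(1-3)] f2[OF h(1,2) mth] RD lT S PD P0' h h'1 d by simp
      qed
      then show "h' = h" by (rule prod_uniq[OF P, rotated 4]) (use h h'1 P0 in auto)
    qed
  qed
  show ?thesis unfolding bourn_normal_def
  proof (intro conjI)
    show "mono C (Comp C t2 l)" by (rule mmono)
    show "\<exists>R r1 r2 pi1 pi2 mt.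
        equivalence_relation C R r1 r2 (Cod C (Comp C t2 l)) \<and>
        is_product C (Dom C (Comp C t2 l)) (Dom C (Comp C t2 l)) pi1 pi2 \<and>
        hom C mt (Dom C pi1) R \<and>
        Comp C r1 mt = Comp C (Comp C t2 l) pi1 \<and> Comp C r2 mt = Comp C (Comp C t2 l) pi2 \<and>
        is_pullback C r1 (Comp C t2 l) mt pi1"
      apply (rule exI[of _ T], rule exI[of _ t1], rule exI[of _ t2], rule exI[of _ p1], rule exI[of _ p2],
         rule exI[of _ mt])
      using E P PB mt mD P0 RD lT S PD by simp
  qed
qed


lemma kernel_normal: assumes K: "is_kernel C \<kappa> f" shows "bourn_normal C \<kappa>"
proof -
  obtain A where A: "Dom C f = A" by blast
  obtain B where B: "Cod C f = B" by blast
  obtain X where X: "Dom C \<kappa> = X" by blast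
  note KD = ker_D[OF K]
  have kA: "Cod C \<kappa> = A" using KD A by simp
  have kz: "Comp C f \<kappa> = z X B" using KD X B by simp
  obtain q1 q2 where Q: "is_pullback C f f q1 q2" using pb_ex by blast
  note QD = pb_D[OF Q]
  obtain P where P: "Dom C q1 = P" by blast
  have q: "Cod C q1 = A" "Cod C q2 = A" "Dom C q2 = P" using QD A P by auto
  have R: "relation C P q1 q2 A" unfolding relation_def
  proof (intro conjI allI impI)
    show "hom C q1 P A" "hom C q2 P A" using q P by auto
    fix a b assume ab: "Cod C a = P \<and> Cod C b = P \<and> Dom C a = Dom C b \<and> Comp C q1 a = Comp C q1 b \<and> Comp C q2 a = Comp C q2 b"
    show "a = b" by (rule pb_uniq[OF Q]) (use ab P in auto)
  qed
  have E: "equivalence_relation C P q1 q2 A"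
    unfolding equivalence_relation_def reflexive_relation_def
  proof (intro conjI)
    show "relation C P q1 q2 A" by (rule R)
    obtain s where "Dom C s = A" "Cod C s = P" "Comp C q1 s = Idm C A" "Comp C q2 s = Idm C A"
      by (rule pb_fac[OF Q, of "Idm C A" "Idm C A"]) (use A P in auto)
    then show "\<exists>s. hom C s A P \<and> Comp C q1 s = Idm C A \<and> Comp C q2 s = Idm C A" by auto
    obtain \<sigma> where "Dom C \<sigma> = P" "Cod C \<sigma> = P" "Comp C q1 \<sigma> = q2" "Comp C q2 \<sigma> = q1"
      by (rule pb_fac[OF Q, of q2 q1]) (use q P QD in auto)
    then show "\<exists>\<sigma>. hom C \<sigma> P P \<and> Comp C q1 \<sigma> = q2 \<and> Comp C q2 \<sigma> = q1" by auto
    show "\<forall>p1 p2. is_pullback C q2 q1 p1 p2 \<longrightarrow>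
        (\<exists>\<tau>. hom C \<tau> (Dom C p1) P \<and> Comp C q1 \<tau> = Comp C q1 p1 \<and> Comp C q2 \<tau> = Comp C q2 p2)"
    proof (intro allI impI)
      fix p1 p2 assume PB: "is_pullback C q2 q1 p1 p2"
      note PD = pb_D[OF PB]
      have sq: "Comp C f (Comp C q1 p1) = Comp C f (Comp C q2 p2)"
      proof -
        have "Comp C f (Comp C q1 p1) = Comp C f (Comp C q2 p1)"
          using assoc_eq[OF QD(5), of p1] QD PD q P by simp
        also have "... = Comp C f (Comp C q1 p2)" using PD by simp
        also have "... = Comp C f (Comp C q2 p2)"
          using assoc_eq[OF QD(5), of p2] QD PD q P by simp
        finally show ?thesis .
      qed
      obtain \<tau> where "Dom C \<tau> = Dom C p1" "Cod C \<tau> = P" "Comp C q1 \<tau> = Comp C q1 p1" "Comp C q2 \<tau> = Comp C q2 p2"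
        by (rule pb_fac[OF Q, of "Comp C q1 p1" "Comp C q2 p2"]) (use sq q P PD A in auto)
      then show "\<exists>\<tau>. hom C \<tau> (Dom C p1) P \<and> Comp C q1 \<tau> = Comp C q1 p1 \<and> Comp C q2 \<tau> = Comp C q2 p2" by auto
    qed
  qed
  obtain k where k: "Dom C k = X" "Cod C k = P" "Comp C q1 k = z X A" "Comp C q2 k = \<kappa>"
    by (rule pb_fac[OF Q, of "z X A" \<kappa>]) (use A B X kA kz P in auto)
  have kmono: "mono C k" unfolding mono_def
  proof (intro allI impI)
    fix a b assume ab: "Cod C a = Dom C k \<and> Cod C b = Dom C k \<and> Dom C a = Dom C b \<and> Comp C k a = Comp C k b"
    have "Comp C \<kappa> a = Comp C \<kappa> b"
      using assoc_eq[OF k(4), of a] assoc_eq[OF k(4), of b] ab k q by simp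
    then show "a = b" by (rule monoD[OF ker_mono[OF K], rotated 3]) (use ab k X in auto)
  qed
  have KK: "is_kernel C k q1"
  proof (rule ker_intro)
    show "Cod C k = Dom C q1" "mono C k" using k P kmono by auto
    show "Comp C q1 k = z (Dom C k) (Cod C q1)" using k q by simp
    fix a assume a: "Cod C a = Dom C q1" "Comp C q1 a = z (Dom C a) (Cod C q1)"
    have fz: "Comp C f (Comp C q2 a) = z (Dom C a) B"
    proof -
      have "Comp C f (Comp C q2 a) = Comp C f (Comp C q1 a)"
        using assoc_eq[OF QD(5), of a] QD q P a by simp
      then show ?thesis using a q A B by simp
    qed
    obtain c where c: "Dom C c = Dom C a" "Cod C c = X" "Comp C \<kappa> c = Comp C q2 a"
      by (rule ker_fac[OF K, of "Comp C q2 a"]) (use fz a q P A B X in auto)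
    have "Comp C k c = a"
    proof (rule pb_uniq[OF Q])
      show "Cod C (Comp C k c) = Dom C q1" "Cod C a = Dom C q1" "Dom C (Comp C k c) = Dom C a"
        using k c a P by auto
      show "Comp C q1 (Comp C k c) = Comp C q1 a"
        using assoc_eq[OF k(3), of c] k c q a P by simp
      show "Comp C q2 (Comp C k c) = Comp C q2 a"
        using assoc_eq[OF k(4), of c] k c q a by simp
    qed
    then show "\<exists>h. Dom C h = Dom C a \<and> Cod C h = Dom C k \<and> Comp C k h = a" using c k by auto
  qed
  have "bourn_normal C (Comp C q2 k)" by (rule normalization[OF E KK])
  then show ?thesis using k by simp
qed

lemma normal_kernel: assumes N: "bourn_normal C n"
  obtains R r1 r2 k where "equivalence_relation C R r1 r2 (Cod C n)" "is_kernel C k r1" "Dom C k = Dom C n"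
    "Comp C r2 k = n"
proof -
  obtain S where S: "Dom C n = S" by blast
  obtain Y where Y: "Cod C n = Y" by blast
  obtain R r1 r2 pi1 pi2 mt where E: "equivalence_relation C R r1 r2 Y" and P: "is_product C S S pi1 pi2"
    and mt: "hom C mt (Dom C pi1) R" "Comp C r1 mt = Comp C n pi1" "Comp C r2 mt = Comp C n pi2"
    and PB: "is_pullback C r1 n mt pi1" and nm: "mono C n"
    using N S Y unfolding bourn_normal_def by blast
  note RD = rel_D[OF eqv_rel[OF E]]
  note PD = prod_D[OF P]
  obtain P0 where P0: "Dom C pi1 = P0" by blast
  have P0': "Dom C pi2 = P0" using P0 PD by simp
  have mt': "Dom C mt = P0" "Cod C mt = R" using mt P0 by auto
  obtain e where e: "Dom C e = S" "Cod C e = P0" "Comp C pi1 e = z S S" "Comp C pi2 e = Idm C S"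
    by (rule prod_fac[OF P, of "z S S" "Idm C S"]) (use P0 in auto)
  have k1: "Comp C r1 (Comp C mt e) = z S Y"
    using assoc_eq[OF mt(2), of e] mt' e RD S Y PD P0 by simp
  have k2: "Comp C r2 (Comp C mt e) = n"
    using assoc_eq[OF mt(3), of e] mt' e RD S Y PD P0' by simp
  have kmono: "mono C (Comp C mt e)" unfolding mono_def
  proof (intro allI impI)
    fix a b assume ab: "Cod C a = Dom C (Comp C mt e) \<and> Cod C b = Dom C (Comp C mt e) \<and> Dom C a = Dom C b \<and>
       Comp C (Comp C mt e) a = Comp C (Comp C mt e) b"
    have ab': "Cod C a = S" "Cod C b = S" "Dom C a = Dom C b" using ab mt' e by auto
    have "Comp C n a = Comp C n b"
      using assoc_eq[OF k2, of a] assoc_eq[OF k2, of b] ab ab' mt' e RD by simp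
    then show "a = b" by (rule monoD[OF nm, rotated 3]) (use ab' S in auto)
  qed
  have KK: "is_kernel C (Comp C mt e) r1"
  proof (rule ker_intro)
    show "Cod C (Comp C mt e) = Dom C r1" "mono C (Comp C mt e)" using mt' e RD kmono by auto
    show "Comp C r1 (Comp C mt e) = z (Dom C (Comp C mt e)) (Cod C r1)" using k1 mt' e RD by simp
    fix a assume a: "Cod C a = Dom C r1" "Comp C r1 a = z (Dom C a) (Cod C r1)"
    obtain W where W: "Dom C a = W" by blast
    have sq: "Comp C r1 a = Comp C n (z W S)" using a W RD S Y by simp
    have p: "Cod C a = Dom C r1" "Cod C (z W S) = Dom C n" "Dom C a = Dom C (z W S)"
      "Comp C r1 a = Comp C n (z W S)" using sq a W S by auto
    obtain h where h0: "Dom C h = Dom C a" "Cod C h = Dom C mt" "Comp C mt h = a" "Comp C pi1 h = z W S"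
      using pb_fac[OF PB p] by blast
    have h: "Dom C h = W" "Cod C h = P0" "Comp C mt h = a" "Comp C pi1 h = z W S" using h0 W mt' by auto
    have "h = Comp C e (Comp C pi2 h)"
    proof (rule prod_uniq[OF P])
      show "Cod C h = Dom C pi1" "Cod C (Comp C e (Comp C pi2 h)) = Dom C pi1"
        "Dom C h = Dom C (Comp C e (Comp C pi2 h))" using h e P0 P0' PD by auto
      show "Comp C pi1 h = Comp C pi1 (Comp C e (Comp C pi2 h))"
        using assoc_eq[OF e(3), of "Comp C pi2 h"] h e P0 P0' PD by simp
      show "Comp C pi2 h = Comp C pi2 (Comp C e (Comp C pi2 h))"
        using assoc_eq[OF e(4), of "Comp C pi2 h"] h e P0 P0' PD by simp
    qed
    then have "Comp C (Comp C mt e) (Comp C pi2 h) = a"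
      using h mt' e P0' PD by (metis assoc comp_cod)
    then show "\<exists>h. Dom C h = Dom C a \<and> Cod C h = Dom C (Comp C mt e) \<and> Comp C (Comp C mt e) h = a"
      using h W e mt' P0' PD by (intro exI[of _ "Comp C pi2 h"]) auto
  qed
  show ?thesis
    by (rule that[of R r1 r2 "Comp C mt e"]) (use E Y KK mt' e S k2 in auto)
qed


lemma b_to_c: assumes RR: "reflexive_relation C R r1 r2 Y" and K: "is_kernel C k r1"
  and du: "Dom C k = Cod C u" and N: "bourn_normal C (Comp C k u)"
  shows "\<exists>T t1 t2 v l. reflexive_relation C T t1 t2 Y \<and> hom C v T R \<and> mono C v \<and>
                    Comp C r1 v = t1 \<and> Comp C r2 v = t2 \<and> is_kernel C l t1 \<and> Dom C l = Dom C u \<and>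
                    Comp C v l = Comp C k u"
proof -
  have R: "relation C R r1 r2 Y" using RR unfolding reflexive_relation_def by blast
  note RD = rel_D[OF R]
  note KD = ker_D[OF K]
  obtain S where S: "Dom C u = S" by blast
  obtain X where X: "Cod C u = X" by blast
  have kR: "Cod C k = R" "Dom C k = X" using KD RD du X by auto
  have kz: "Comp C r1 k = z X Y" using KD kR RD by simp
  have kuD: "Dom C (Comp C k u) = S" "Cod C (Comp C k u) = R" using kR S X by auto
  obtain E e1 e2 k' where Eq: "equivalence_relation C E e1 e2 R" and K': "is_kernel C k' e1"
    and k'D: "Dom C k' = S" and k'2: "Comp C e2 k' = Comp C k u"
    by (rule normal_kernel[OF N]) (use kuD in auto)
  note ED = rel_D[OF eqv_rel[OF Eq]]
  note K'D = ker_D[OF K']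
  have k'E: "Cod C k' = E" using K'D ED by simp
  have k'z: "Comp C e1 k' = z S R" using K'D ED k'D by simp
  obtain s where s: "Dom C s = Y" "Cod C s = R" "Comp C r1 s = Idm C Y" "Comp C r2 s = Idm C Y"
    by (rule refl_ex[OF RR])
  have gD: "Dom C (Comp C s (Comp C r1 e2)) = E" "Cod C (Comp C s (Comp C r1 e2)) = R" using s RD ED by auto
  obtain j where j1: "Cod C j = E" and j2: "Comp C e1 j = Comp C (Comp C s (Comp C r1 e2)) j"
    and jm: "mono C j"
    and jf: "\<And>a. Cod C a = E \<Longrightarrow> Comp C e1 a = Comp C (Comp C s (Comp C r1 e2)) a \<Longrightarrow>
        \<exists>h. Dom C h = Dom C a \<and> Cod C h = Dom C j \<and> Comp C j h = a"
    by (rule eq_ex[of e1 E R "Comp C s (Comp C r1 e2)"]) (use ED gD in auto)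
  obtain T where T: "Dom C j = T" by blast
  have ej: "Comp C e1 j = Comp C s (Comp C r1 (Comp C e2 j))" using j2 s RD ED j1 by simp
  have ej_a: "Comp C e1 (Comp C j a) = Comp C s (Comp C r1 (Comp C e2 (Comp C j a)))" if "Cod C a = T" for a
    using assoc_eq[OF ej, of a] that j1 T ED s RD by simp
  have vD: "Dom C (Comp C e2 j) = T" "Cod C (Comp C e2 j) = R" using j1 T ED by auto
  have vmono: "mono C (Comp C e2 j)" unfolding mono_def
  proof (intro allI impI)
    fix a b assume ab: "Cod C a = Dom C (Comp C e2 j) \<and> Cod C b = Dom C (Comp C e2 j) \<and> Dom C a = Dom C b \<and>
       Comp C (Comp C e2 j) a = Comp C (Comp C e2 j) b"
    have ab': "Cod C a = T" "Cod C b = T" "Dom C a = Dom C b" using ab vD by auto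
    have 2: "Comp C e2 (Comp C j a) = Comp C e2 (Comp C j b)" using ab ab' j1 T ED by simp
    have 1: "Comp C e1 (Comp C j a) = Comp C e1 (Comp C j b)" using ej_a[OF ab'(1)] ej_a[OF ab'(2)] 2 by simp
    have "Comp C j a = Comp C j b" by (rule rel_jm[OF eqv_rel[OF Eq]]) (use ab' j1 T 1 2 in auto)
    then show "a = b" by (rule monoD[OF jm, rotated 3]) (use ab' T in auto)
  qed
  have TR: "relation C T (Comp C r1 (Comp C e2 j)) (Comp C r2 (Comp C e2 j)) Y"
    unfolding relation_def
  proof (intro conjI allI impI)
    show "hom C (Comp C r1 (Comp C e2 j)) T Y" "hom C (Comp C r2 (Comp C e2 j)) T Y" using vD RD by auto
    fix a b assume ab: "Cod C a = T \<and> Cod C b = T \<and> Dom C a = Dom C b \<and>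
      Comp C (Comp C r1 (Comp C e2 j)) a = Comp C (Comp C r1 (Comp C e2 j)) b \<and>
      Comp C (Comp C r2 (Comp C e2 j)) a = Comp C (Comp C r2 (Comp C e2 j)) b"
    have "Comp C (Comp C e2 j) a = Comp C (Comp C e2 j) b"
      by (rule rel_jm[OF R]) (use ab vD RD j1 T ED in auto)
    then show "a = b" by (rule monoD[OF vmono, rotated 3]) (use ab vD in auto)
  qed
  obtain \<delta> where d: "Dom C \<delta> = R" "Cod C \<delta> = E" "Comp C e1 \<delta> = Idm C R" "Comp C e2 \<delta> = Idm C R"
    by (rule refl_ex[OF eqv_refl[OF Eq]])
  have ds1: "Comp C e1 (Comp C \<delta> s) = s" using assoc_eq[OF d(3), of s] d s ED by simp
  have ds2: "Comp C e2 (Comp C \<delta> s) = s" using assoc_eq[OF d(4), of s] d s ED by simp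
  have "\<exists>h. Dom C h = Dom C (Comp C \<delta> s) \<and> Cod C h = Dom C j \<and> Comp C j h = Comp C \<delta> s"
  proof (rule jf)
    show "Cod C (Comp C \<delta> s) = E" using d s by simp
    show "Comp C e1 (Comp C \<delta> s) = Comp C (Comp C s (Comp C r1 e2)) (Comp C \<delta> s)"
      using ds1 ds2 d s RD ED by simp
  qed
  then obtain \<rho> where rho: "Dom C \<rho> = Y" "Cod C \<rho> = T" "Comp C j \<rho> = Comp C \<delta> s" using d s T by auto
  have TRR: "reflexive_relation C T (Comp C r1 (Comp C e2 j)) (Comp C r2 (Comp C e2 j)) Y"
    unfolding reflexive_relation_def
  proof (intro conjI)
    show "relation C T (Comp C r1 (Comp C e2 j)) (Comp C r2 (Comp C e2 j)) Y" by (rule TR)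
    have "Comp C (Comp C r1 (Comp C e2 j)) \<rho> = Idm C Y" using rho ds2 s j1 T ED RD by simp
    moreover have "Comp C (Comp C r2 (Comp C e2 j)) \<rho> = Idm C Y" using rho ds2 s j1 T ED RD by simp
    ultimately show "\<exists>s. hom C s Y T \<and> Comp C (Comp C r1 (Comp C e2 j)) s = Idm C Y \<and>
        Comp C (Comp C r2 (Comp C e2 j)) s = Idm C Y" using rho by auto
  qed
  have "\<exists>h. Dom C h = Dom C k' \<and> Cod C h = Dom C j \<and> Comp C j h = k'"
  proof (rule jf)
    show "Cod C k' = E" by (rule k'E)
    have "Comp C (Comp C s (Comp C r1 e2)) k' = Comp C s (Comp C r1 (Comp C k u))"
      using k'2 s RD ED k'E by simp
    also have "... = z S R" using assoc_eq[OF kz, of u] s RD kR S X by simp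
    finally show "Comp C e1 k' = Comp C (Comp C s (Comp C r1 e2)) k'" using k'z by simp
  qed
  then obtain l where l: "Dom C l = S" "Cod C l = T" "Comp C j l = k'" using k'D T by auto
  have vl: "Comp C (Comp C e2 j) l = Comp C k u" using l k'2 j1 T ED by simp
  have lmono: "mono C l" unfolding mono_def
  proof (intro allI impI)
    fix a b assume ab: "Cod C a = Dom C l \<and> Cod C b = Dom C l \<and> Dom C a = Dom C b \<and> Comp C l a = Comp C l b"
    have "Comp C k' a = Comp C k' b" using assoc_eq[OF l(3), of a] assoc_eq[OF l(3), of b] ab l j1 T by simp
    then show "a = b" by (rule monoD[OF ker_mono[OF K'], rotated 3]) (use ab l k'D in auto)
  qed
  have LK: "is_kernel C l (Comp C r1 (Comp C e2 j))"
  proof (rule ker_intro)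
    show "Cod C l = Dom C (Comp C r1 (Comp C e2 j))" "mono C l" using l vD RD lmono by auto
    show "Comp C (Comp C r1 (Comp C e2 j)) l = z (Dom C l) (Cod C (Comp C r1 (Comp C e2 j)))"
      using vl l vD RD assoc_eq[OF kz, of u] kR S X j1 T ED by simp
    fix a assume a: "Cod C a = Dom C (Comp C r1 (Comp C e2 j))"
      "Comp C (Comp C r1 (Comp C e2 j)) a = z (Dom C a) (Cod C (Comp C r1 (Comp C e2 j)))"
    obtain W where W: "Dom C a = W" by blast
    have a': "Cod C a = T" "Comp C r1 (Comp C e2 (Comp C j a)) = z W Y" using a vD RD W j1 T ED by auto
    have ez: "Comp C e1 (Comp C j a) = z W R" using ej_a[OF a'(1)] a'(2) s by simp
    have p1: "Cod C (Comp C j a) = Dom C e1" and p2: "Comp C e1 (Comp C j a) = z (Dom C (Comp C j a)) (Cod C e1)"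
      using ez a' j1 T ED W by auto
    obtain c0 where c0: "Dom C c0 = Dom C (Comp C j a)" "Cod C c0 = Dom C k'" "Comp C k' c0 = Comp C j a"
      using ker_fac[OF K' p1 p2] by blast
    have c: "Dom C c0 = W" "Cod C c0 = S" "Comp C k' c0 = Comp C j a" using c0 a' j1 T W k'D by auto
    have "Comp C j (Comp C l c0) = Comp C j a" using assoc_eq[OF l(3), of c0] l c T by simp
    then have "Comp C l c0 = a" by (rule monoD[OF jm, rotated 3]) (use a' l c T W in auto)
    then show "\<exists>h. Dom C h = Dom C a \<and> Cod C h = Dom C l \<and> Comp C l h = a" using c W l by auto
  qed
  show ?thesis
    apply (rule exI[of _ T], rule exI[of _ "Comp C r1 (Comp C e2 j)"], rule exI[of _ "Comp C r2 (Comp C e2 j)"],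
      rule exI[of _ "Comp C e2 j"], rule exI[of _ l])
    using TRR vD vmono LK l S vl RD by simp
qed

end

theorem proposition5p1:
  fixes C :: "('o, 'm) cat" and u :: 'm
  assumes "category C" and "pointed C" and "finitely_complete C" and "maltsev C"
  shows "(characteristic_mono C u
           \<longleftrightarrow> (\<forall>\<kappa>. protosplit_mono C \<kappa> \<and> Dom C \<kappa> = Cod C u \<longrightarrow> bourn_normal C (Comp C \<kappa> u)))
       \<and> ((\<forall>\<kappa>. protosplit_mono C \<kappa> \<and> Dom C \<kappa> = Cod C u \<longrightarrow> bourn_normal C (Comp C \<kappa> u))
           \<longleftrightarrow> (\<forall>Y R r1 r2 k. reflexive_relation C R r1 r2 Y \<and> is_kernel C k r1 \<and> Dom C k = Cod C u \<longrightarrow>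
                 (\<exists>T t1 t2 v l. reflexive_relation C T t1 t2 Y \<and> hom C v T R \<and> mono C v \<and>
                    Comp C r1 v = t1 \<and> Comp C r2 v = t2 \<and> is_kernel C l t1 \<and> Dom C l = Dom C u \<and>
                    Comp C v l = Comp C k u)))
       \<and> ((\<forall>Y R r1 r2 k. reflexive_relation C R r1 r2 Y \<and> is_kernel C k r1 \<and> Dom C k = Cod C u \<longrightarrow>
                 (\<exists>T t1 t2 v l. reflexive_relation C T t1 t2 Y \<and> hom C v T R \<and> mono C v \<and>
                    Comp C r1 v = t1 \<and> Comp C r2 v = t2 \<and> is_kernel C l t1 \<and> Dom C l = Dom C u \<and>
                    Comp C v l = Comp C k u))
           \<longleftrightarrow> (\<forall>Y R r1 r2 k. equivalence_relation C R r1 r2 Y \<and> is_kernel C k r1 \<and> Dom C k = Cod C u \<longrightarrow>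
                 (\<exists>T t1 t2 v l. equivalence_relation C T t1 t2 Y \<and> hom C v T R \<and> mono C v \<and>
                    Comp C r1 v = t1 \<and> Comp C r2 v = t2 \<and> is_kernel C l t1 \<and> Dom C l = Dom C u \<and>
                    Comp C v l = Comp C k u)))"
proof -
  interpret pfc C using assms(1-3) by (rule pfc.intro)
  have mal: "\<And>R r1 r2 Y. reflexive_relation C R r1 r2 Y \<Longrightarrow> equivalence_relation C R r1 r2 Y"
    using assms(4) unfolding maltsev_def by blast
  let ?a = "characteristic_mono C u"
  let ?b = "\<forall>\<kappa>. protosplit_mono C \<kappa> \<and> Dom C \<kappa> = Cod C u \<longrightarrow> bourn_normal C (Comp C \<kappa> u)"
  let ?c = "\<forall>Y R r1 r2 k. reflexive_relation C R r1 r2 Y \<and> is_kernel C k r1 \<and> Dom C k = Cod C u \<longrightarrow>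
                 (\<exists>T t1 t2 v l. reflexive_relation C T t1 t2 Y \<and> hom C v T R \<and> mono C v \<and>
                    Comp C r1 v = t1 \<and> Comp C r2 v = t2 \<and> is_kernel C l t1 \<and> Dom C l = Dom C u \<and>
                    Comp C v l = Comp C k u)"
  let ?d = "\<forall>Y R r1 r2 k. equivalence_relation C R r1 r2 Y \<and> is_kernel C k r1 \<and> Dom C k = Cod C u \<longrightarrow>
                 (\<exists>T t1 t2 v l. equivalence_relation C T t1 t2 Y \<and> hom C v T R \<and> mono C v \<and>
                    Comp C r1 v = t1 \<and> Comp C r2 v = t2 \<and> is_kernel C l t1 \<and> Dom C l = Dom C u \<and>
                    Comp C v l = Comp C k u)"
  have ab: "?a \<Longrightarrow> ?b"
    unfolding characteristic_mono_def protosplit_mono_def using kernel_normal by blast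
  have bc: "?b \<Longrightarrow> ?c"
  proof (intro allI impI)
    fix Y R r1 r2 k assume b: ?b and h: "reflexive_relation C R r1 r2 Y \<and> is_kernel C k r1 \<and> Dom C k = Cod C u"
    then have RR: "reflexive_relation C R r1 r2 Y" and K: "is_kernel C k r1" and du: "Dom C k = Cod C u" by auto
    note RD = rel_D[OF conjunct1[OF RR[unfolded reflexive_relation_def]]]
    obtain s where s: "Dom C s = Y" "Cod C s = R" "Comp C r1 s = Idm C Y" "Comp C r2 s = Idm C Y"
      by (rule refl_ex[OF RR])
    have "split_epi C r1" unfolding split_epi_def using s RD by auto
    then have "protosplit_mono C k" unfolding protosplit_mono_def using K by blast
    then have "bourn_normal C (Comp C k u)" using b du by blast
    then show "\<exists>T t1 t2 v l. reflexive_relation C T t1 t2 Y \<and> hom C v T R \<and> mono C v \<and>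
                    Comp C r1 v = t1 \<and> Comp C r2 v = t2 \<and> is_kernel C l t1 \<and> Dom C l = Dom C u \<and>
                    Comp C v l = Comp C k u" by (rule b_to_c[OF RR K du])
  qed
  have ca: "?c \<Longrightarrow> ?a"
    unfolding characteristic_mono_def
  proof (intro allI impI)
    fix n assume c: ?c and n: "bourn_normal C n \<and> Dom C n = Cod C u"
    obtain R r1 r2 k where E: "equivalence_relation C R r1 r2 (Cod C n)" and K: "is_kernel C k r1"
      and kD: "Dom C k = Dom C n" and k2: "Comp C r2 k = n"
      by (rule normal_kernel[of n]) (use n in auto)
    note RD = rel_D[OF eqv_rel[OF E]]
    have "reflexive_relation C R r1 r2 (Cod C n) \<and> is_kernel C k r1 \<and> Dom C k = Cod C u"
      using eqv_refl[OF E] K kD n by auto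
    then obtain T t1 t2 v l where T: "reflexive_relation C T t1 t2 (Cod C n)" and v: "hom C v T R"
      and v1: "Comp C r1 v = t1" and v2: "Comp C r2 v = t2" and L: "is_kernel C l t1"
      and lD: "Dom C l = Dom C u" and vl: "Comp C v l = Comp C k u"
      using c by blast
    have TE: "equivalence_relation C T t1 t2 (Cod C n)" by (rule mal[OF T])
    note TD = rel_D[OF eqv_rel[OF TE]]
    note LD = ker_D[OF L]
    have "bourn_normal C (Comp C t2 l)" by (rule normalization[OF TE L])
    moreover have "Comp C t2 l = Comp C n u"
    proof -
      have "Comp C t2 l = Comp C (Comp C r2 v) l" using v2 by simp
      also have "... = Comp C r2 (Comp C v l)" using v RD LD TD by simp
      also have "... = Comp C r2 (Comp C k u)" using vl by simp
      also have "... = Comp C (Comp C r2 k) u" using ker_D[OF K] RD kD n by simp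
      finally show ?thesis using k2 by simp
    qed
    ultimately show "bourn_normal C (Comp C n u)" by simp
  qed
  have cd: "?c \<longleftrightarrow> ?d"
  proof
    assume c: ?c
    show ?d
    proof (intro allI impI)
      fix Y R r1 r2 k assume h: "equivalence_relation C R r1 r2 Y \<and> is_kernel C k r1 \<and> Dom C k = Cod C u"
      then have "reflexive_relation C R r1 r2 Y \<and> is_kernel C k r1 \<and> Dom C k = Cod C u" using eqv_refl by blast
      then obtain T t1 t2 v l where "reflexive_relation C T t1 t2 Y \<and> hom C v T R \<and> mono C v \<and>
                    Comp C r1 v = t1 \<and> Comp C r2 v = t2 \<and> is_kernel C l t1 \<and> Dom C l = Dom C u \<and>
                    Comp C v l = Comp C k u" using c by blast
      then show "\<exists>T t1 t2 v l. equivalence_relation C T t1 t2 Y \<and> hom C v T R \<and> mono C v \<and>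
                    Comp C r1 v = t1 \<and> Comp C r2 v = t2 \<and> is_kernel C l t1 \<and> Dom C l = Dom C u \<and>
                    Comp C v l = Comp C k u" using mal by blast
    qed
  next
    assume d: ?d
    show ?c
    proof (intro allI impI)
      fix Y R r1 r2 k assume h: "reflexive_relation C R r1 r2 Y \<and> is_kernel C k r1 \<and> Dom C k = Cod C u"
      then have "equivalence_relation C R r1 r2 Y \<and> is_kernel C k r1 \<and> Dom C k = Cod C u" using mal by blast
      then obtain T t1 t2 v l where "equivalence_relation C T t1 t2 Y \<and> hom C v T R \<and> mono C v \<and>
                    Comp C r1 v = t1 \<and> Comp C r2 v = t2 \<and> is_kernel C l t1 \<and> Dom C l = Dom C u \<and>
                    Comp C v l = Comp C k u" using d by blast
      then show "\<exists>T t1 t2 v l. reflexive_relation C T t1 t2 Y \<and> hom C v T R \<and> mono C v \<and>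
                    Comp C r1 v = t1 \<and> Comp C r2 v = t2 \<and> is_kernel C l t1 \<and> Dom C l = Dom C u \<and>
                    Comp C v l = Comp C k u" using eqv_refl by blast
    qed
  qed
  show ?thesis using ab bc ca cd by blast
qed

end
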